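(* Let $w\geqslant 4$ be an even integer and let $L_1$ be the graph with vertex set $\mathbb{Z}_{w+1}\cup\{\infty\}$ whose edge set consists of all pairs of distinct vertices except the pairs $\{x,-x\}$ for $x\in\{1,\dots,w/2\}$ and the pairs $\{1,\infty\}$, $\{0,2\}$, $\{1,2\}$. Then (i) $\chi'(L_1)=w$; and (ii) in any proper $w$-edge colouring of $L_1$, the set of colours that hit vertex $1$ equals the set of colours that hit vertex $2$.
   Context: $\mathbb{Z}_{w+1}$ is the additive group of integers modulo $w+1$, and $\infty$ is an extra vertex. $\chi'$ denotes chromatic index. In an edge colouring, a colour hits a vertex if some edge of that colour is incident with it. *)

theory Defs
  imports Main
begin

text \<open>Simple graphs are given by their edge set, a set of 2-element vertex sets.
  An edge colouring with k colours uses the colours 0..k-1.\<close>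

definition proper_edge_colouring :: "'v set set \<Rightarrow> ('v set \<Rightarrow> nat) \<Rightarrow> nat \<Rightarrow> bool" where
  "proper_edge_colouring E c k \<longleftrightarrow>
     (\<forall>e\<in>E. c e < k) \<and>
     (\<forall>e\<in>E. \<forall>f\<in>E. e \<noteq> f \<and> e \<inter> f \<noteq> {} \<longrightarrow> c e \<noteq> c f)"

definition chromatic_index :: "'v set set \<Rightarrow> nat" where
  "chromatic_index E = (LEAST k. \<exists>c. proper_edge_colouring E c k)"

definition colours_at :: "'v set set \<Rightarrow> ('v set \<Rightarrow> nat) \<Rightarrow> 'v \<Rightarrow> nat set" where
  "colours_at E c v = {c e | e. e \<in> E \<and> v \<in> e}"

text \<open>Vertices: Some x for x in Z_(w+1) = {0..w}, None for infinity.
  The negative of x in {1..w/2} is w+1-x.\<close>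

definition L1_vertices :: "nat \<Rightarrow> nat option set" where
  "L1_vertices w = Some ` {0..w} \<union> {None}"

definition L1_removed :: "nat \<Rightarrow> nat option set set" where
  "L1_removed w = {{Some x, Some (w + 1 - x)} | x. 1 \<le> x \<and> x \<le> w div 2}
     \<union> {{Some 1, None}, {Some 0, Some 2}, {Some 1, Some 2}}"

definition L1 :: "nat \<Rightarrow> nat option set set" where
  "L1 w = {{u, v} | u v. u \<in> L1_vertices w \<and> v \<in> L1_vertices w \<and> u \<noteq> v}
          - L1_removed w"

end

theory Submission imports Defs begin

fun cp :: "nat \<Rightarrow> nat option \<Rightarrow> nat option \<Rightarrow> nat" where
  "cp w (Some a) (Some b) = (a+b)*(w div 2+1) mod (w+1)"
| "cp w (Some a) None = (if a = 0 then 1 else a)"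
| "cp w None (Some a) = (if a = 0 then 1 else a)"
| "cp w None None = 0"

lemma cp_sym: "cp w u v = cp w v u"
  by (cases u; cases v) (auto simp: add.commute)

lemma mod_h:
  fixes w x y :: nat
  assumes "even w" "x * (w div 2 + 1) mod (w+1) = y * (w div 2 + 1) mod (w+1)"
  shows "x mod (w+1) = y mod (w+1)"
proof -
  have h: "(w div 2 + 1) * 2 = (w+1) + 1" using assms(1) by auto
  have e: "(x * (w div 2 + 1) * 2) mod (w+1) = (y * (w div 2 + 1) * 2) mod (w+1)"
    using assms(2) mod_mult_left_eq by metis
  have ex: "(x * (w div 2 + 1) * 2) mod (w+1) = x mod (w+1)"
  proof -
    have "x * (w div 2 + 1) * 2 = x * ((w div 2 + 1) * 2)" by (simp only: mult.assoc)
    also have "\<dots> = x + (w+1) * x" using h by (simp add: algebra_simps)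
    finally show ?thesis by (simp only: mod_mult_self2)
  qed
  have ey: "(y * (w div 2 + 1) * 2) mod (w+1) = y mod (w+1)"
  proof -
    have "y * (w div 2 + 1) * 2 = y * ((w div 2 + 1) * 2)" by (simp only: mult.assoc)
    also have "\<dots> = y + (w+1) * y" using h by (simp add: algebra_simps)
    finally show ?thesis by (simp only: mod_mult_self2)
  qed
  show ?thesis using e ex ey by simp
qed

lemma mod_cancel: "((a::nat) + b) mod m = (a + c) mod m \<Longrightarrow> b mod m = c mod m"
proof -
  assume "(a + b) mod m = (a + c) mod m"
  then obtain q1 q2 where "a + b + m*q1 = a + c + m*q2" unfolding nat_mod_eq_iff by blast
  then have "b + m*q1 = c + m*q2" by simp
  then show ?thesis unfolding nat_mod_eq_iff by blast
qed


lemma L1_mem: "e \<in> L1 w \<longleftrightarrow> (\<exists>u v. e = {u,v} \<and> u \<in> L1_vertices w \<and> v \<in> L1_vertices w \<and> u \<noteq> v) \<and> e \<notin> L1_removed w"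
  by (simp only: L1_def Diff_iff mem_Collect_eq)

lemma L1_iff: "{u,v} \<in> L1 w \<longleftrightarrow> u \<in> L1_vertices w \<and> v \<in> L1_vertices w \<and> u \<noteq> v \<and> {u,v} \<notin> L1_removed w"
proof
  assume "{u,v} \<in> L1 w"
  then obtain a b where ab: "{u,v}={a,b}" "a \<in> L1_vertices w" "b \<in> L1_vertices w" "a \<noteq> b"
    and nr: "{u,v} \<notin> L1_removed w" unfolding L1_mem by (elim conjE exE) 
  from ab(1) have "(u=a \<and> v=b) \<or> (u=b \<and> v=a)" by (simp add: doubleton_eq_iff)
  then show "u \<in> L1_vertices w \<and> v \<in> L1_vertices w \<and> u \<noteq> v \<and> {u,v} \<notin> L1_removed w"
    using ab nr by (elim disjE conjE) simp_all
next
  assume "u \<in> L1_vertices w \<and> v \<in> L1_vertices w \<and> u \<noteq> v \<and> {u,v} \<notin> L1_removed w"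
  then show "{u,v} \<in> L1 w" unfolding L1_mem by blast
qed

lemma R_mem: "e \<in> L1_removed w \<longleftrightarrow> (\<exists>x. e = {Some x, Some (w+1-x)} \<and> 1 \<le> x \<and> x \<le> w div 2) \<or> e = {Some 1, None} \<or> e = {Some 0, Some 2} \<or> e = {Some 1, Some 2}"
  by (simp only: L1_removed_def Un_iff mem_Collect_eq insert_iff empty_iff simp_thms)

lemma rem_SN: "{Some a, None} \<in> L1_removed w \<longleftrightarrow> a = 1"
  unfolding R_mem by (simp add: doubleton_eq_iff)

lemma rem_SS:
  assumes "even w" "a \<le> w" "b \<le> w"
  shows "{Some a, Some b} \<in> L1_removed w \<longleftrightarrow> (a + b = w+1 \<or> {a,b}={0,2} \<or> {a,b}={1,2})"
proof
  assume "{Some a, Some b} \<in> L1_removed w"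
  then have "(\<exists>x. {Some a, Some b} = {Some x, Some (w+1-x)} \<and> 1 \<le> x \<and> x \<le> w div 2) \<or>
    {Some a, Some b} = {Some 1, None} \<or> {Some a, Some b} = {Some 0, Some 2} \<or>
    {Some a, Some b} = {Some 1, Some 2}" by (simp only: R_mem)
  then show "a + b = w+1 \<or> {a,b}={0,2} \<or> {a,b}={1,2}"
  proof (elim disjE exE conjE)
    fix x
    assume 1: "{Some a, Some b} = {Some x, Some (w+1-x)}" "1 \<le> x" "x \<le> w div 2"
    have "w div 2 \<le> w" by simp
    have "(a = x \<and> b = w+1-x) \<or> (a = w+1-x \<and> b = x)" using 1(1) by (simp add: doubleton_eq_iff)
    then have "a + b = w + 1" using 1(3) \<open>w div 2 \<le> w\<close> by (elim disjE conjE) simp_all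
    then show ?thesis by (rule disjI1)
  next
    assume "{Some a, Some b} = {Some 1, None}" then show ?thesis by (simp add: doubleton_eq_iff)
  next
    assume "{Some a, Some b} = {Some 0, Some 2}"
    then have "(a = 0 \<and> b = 2) \<or> (a = 2 \<and> b = 0)" by (simp add: doubleton_eq_iff)
    then show ?thesis by (elim disjE conjE) (simp_all add: insert_commute)
  next
    assume "{Some a, Some b} = {Some 1, Some 2}"
    then have "(a = 1 \<and> b = 2) \<or> (a = 2 \<and> b = 1)" by (simp add: doubleton_eq_iff)
    then show ?thesis by (elim disjE conjE) (simp_all add: insert_commute)
  qed
next
  obtain k where k: "w = 2*k" using assms(1) by (elim evenE)
  have wk: "w div 2 = k" using k by simp
  assume "a + b = w+1 \<or> {a,b}={0,2} \<or> {a,b}={1,2}"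
  then show "{Some a, Some b} \<in> L1_removed w"
  proof (elim disjE)
    assume 1: "a + b = w+1"
    show ?thesis
    proof (cases "a \<le> k")
      case True
      have "b = w+1-a" "1 \<le> a" using 1 assms(2,3) by simp_all
      then have "{Some a, Some b} = {Some a, Some (w+1-a)} \<and> 1 \<le> a \<and> a \<le> w div 2"
        using True wk by simp
      then show ?thesis unfolding R_mem by (intro disjI1 exI[of _ a])
    next
      case False
      have "a = w+1-b" "1 \<le> b" "b \<le> k" using 1 assms(2,3) False k by simp_all
      then have "{Some a, Some b} = {Some b, Some (w+1-b)} \<and> 1 \<le> b \<and> b \<le> w div 2"
        using wk by (simp add: insert_commute)
      then show ?thesis unfolding R_mem by (intro disjI1 exI[of _ b])
    qed
  next
    assume "{a,b}={0,2}"
    then have "(a = 0 \<and> b = 2) \<or> (a = 2 \<and> b = 0)" by (simp add: doubleton_eq_iff)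
    then have "{Some a, Some b} = {Some 0, Some 2}" by (elim disjE conjE) (simp_all add: insert_commute)
    then show ?thesis unfolding R_mem by simp
  next
    assume "{a,b}={1,2}"
    then have "(a = 1 \<and> b = 2) \<or> (a = 2 \<and> b = 1)" by (simp add: doubleton_eq_iff)
    then have "{Some a, Some b} = {Some 1, Some 2}" by (elim disjE conjE) (simp_all add: insert_commute)
    then show ?thesis unfolding R_mem by simp
  qed
qed

lemma L1_at:
  assumes "e \<in> L1 w" "x \<in> e"
  shows "\<exists>y. e = {x,y} \<and> x \<noteq> y \<and> x \<in> L1_vertices w \<and> y \<in> L1_vertices w \<and> {x,y} \<notin> L1_removed w"
proof -
  obtain a b where ab: "e={a,b}" "a \<in> L1_vertices w" "b \<in> L1_vertices w" "a \<noteq> b"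
    and nr: "e \<notin> L1_removed w" using assms(1) unfolding L1_mem by (elim conjE exE)
  have "x = a \<or> x = b" using assms(2) ab(1) by blast
  then show ?thesis
  proof
    assume "x = a" then show ?thesis using ab nr by blast
  next
    assume "x = b" then have "e = {x, a}" using ab(1) by (simp add: insert_commute)
    then show ?thesis using ab nr \<open>x = b\<close> by auto
  qed
qed

lemma cp_range:
  assumes "even w" "4 \<le> w" "x \<in> L1_vertices w" "y \<in> L1_vertices w" "x \<noteq> y" "{x,y} \<notin> L1_removed w"
  shows "1 \<le> cp w x y \<and> cp w x y \<le> w"
proof (cases x)
  case None
  then obtain a where y: "y = Some a" "a \<le> w" using assms by (cases y) (auto simp: L1_vertices_def)
  have "a \<noteq> 1" using assms(6) None y rem_SN[of a w] by (auto simp: insert_commute)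
  then show ?thesis using None y assms(2) by auto
next
  case (Some a)
  have a: "a \<le> w" using assms Some by (auto simp: L1_vertices_def)
  show ?thesis
  proof (cases y)
    case None
    have "a \<noteq> 1" using assms(6) None Some rem_SN[of a w] by auto
    then show ?thesis using None Some a assms(2) by auto
  next
    case (Some b)
    have b: "b \<le> w" using assms Some by (auto simp: L1_vertices_def)
    have ab: "a \<noteq> b" using assms \<open>x = Some a\<close> Some by auto
    have nr: "a + b \<noteq> w + 1" using assms(6) rem_SS[OF assms(1) a b] \<open>x = Some a\<close> Some by auto
    have "(a+b)*(w div 2+1) mod (w+1) \<noteq> 0"
    proof
      assume "(a+b)*(w div 2+1) mod (w+1) = 0"
      then have "(a+b)*(w div 2+1) mod (w+1) = 0*(w div 2+1) mod (w+1)" by simp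
      from mod_h[OF assms(1) this] have "(a+b) mod (w+1) = 0" by simp
      then obtain q where q: "a + b = (w+1)*q" by auto
      have "q < 2"
      proof (rule ccontr)
        assume "\<not> q < 2"
        then have "(w+1)*2 \<le> (w+1)*q" by (intro mult_le_mono2) simp
        moreover have "a + b < (w+1)*2" using a b by simp
        ultimately show False using q by linarith
      qed
      then have "q = 0 \<or> q = 1" by auto
      then show False using q ab nr by auto
    qed
    moreover have "(a+b)*(w div 2+1) mod (w+1) < w + 1" by simp
    ultimately show ?thesis using \<open>x = Some a\<close> Some by auto
  qed
qed

lemma cp_inj:
  assumes "even w" "4 \<le> w" "x \<in> L1_vertices w" "y \<in> L1_vertices w" "y' \<in> L1_vertices w"
    "x \<noteq> y" "x \<noteq> y'" "y \<noteq> y'" "{x,y} \<notin> L1_removed w" "{x,y'} \<notin> L1_removed w"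
  shows "cp w x y \<noteq> cp w x y'"
proof (cases x)
  case None
  then obtain a b where y: "y = Some a" "y' = Some b" using assms by (cases y; cases y') auto
  have "a \<noteq> 1" "b \<noteq> 1" using assms(9,10) None y rem_SN[of a w] rem_SN[of b w] by (auto simp: insert_commute)
  moreover have "a \<noteq> b" using y assms(8) by auto
  ultimately show ?thesis using None y by auto
next
  case (Some a)
  have a: "a \<le> w" using assms Some by (auto simp: L1_vertices_def)
  have key: "cp w x (Some b) \<noteq> cp w x None" if b: "Some b \<in> L1_vertices w" "Some b \<noteq> x"
     "{x, Some b} \<notin> L1_removed w" "{x, None} \<notin> L1_removed w" for b
  proof
    assume eq: "cp w x (Some b) = cp w x None"
    have bw: "b \<le> w" "a \<noteq> b" using b Some by (auto simp: L1_vertices_def)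
    have a1: "a \<noteq> 1" using b(4) Some rem_SN by auto
    show False
    proof (cases "a = 0")
      case True
      then have "(0+b)*(w div 2+1) mod (w+1) = 1" using eq Some by simp
      also have "1 = 2*(w div 2+1) mod (w+1)"
      proof -
        have "2*(w div 2+1) = 1 + (w+1)" using assms(1) by auto
        moreover have "(1 + (w+1)) mod (w+1) = 1 mod (w+1)" by (rule mod_add_self2)
        ultimately show ?thesis using assms(2) by simp
      qed
      finally have "(0+b) mod (w+1) = 2 mod (w+1)" using mod_h[OF assms(1)] by metis
      then have "b = 2" using bw assms(2) by simp
      moreover have "{Some 0, Some 2} \<in> L1_removed w" using rem_SS[OF assms(1), of 0 2] assms(2) by simp
      ultimately show False using b(3) Some True by simp
    next
      case False
      have "(a+b)*(w div 2+1) mod (w+1) = a" using eq Some False by simp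
      also have "a = (a+a)*(w div 2+1) mod (w+1)"
      proof -
        have "(a+a)*(w div 2+1) = a*((w div 2+1)*2)" by simp
        also have "(w div 2+1)*2 = w + 2" using assms(1) by auto
        finally have "(a+a)*(w div 2+1) = a + (w+1)*a" by simp
        then have "(a+a)*(w div 2+1) mod (w+1) = a mod (w+1)" by (metis mod_mult_self2)
        then show ?thesis using a by simp
      qed
      finally have "(a+b) mod (w+1) = (a+a) mod (w+1)" using mod_h[OF assms(1)] by metis
      then have "b mod (w+1) = a mod (w+1)" by (rule mod_cancel)
      then show False using a bw by simp
    qed
  qed
  show ?thesis
  proof (cases y)
    case None
    then obtain b where "y' = Some b" using assms by (cases y') auto
    then show ?thesis using key[of b] assms None by (metis)
  next
    case (Some b)
    show ?thesis
    proof (cases y')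
      case None
      then show ?thesis using key[of b] assms Some by metis
    next
      case (Some c)
      have bc: "b \<le> w" "c \<le> w" "b \<noteq> c" using assms \<open>y = Some b\<close> Some by (auto simp: L1_vertices_def)
      show ?thesis
      proof
        assume "cp w x y = cp w x y'"
        then have "(a+b)*(w div 2+1) mod (w+1) = (a+c)*(w div 2+1) mod (w+1)"
          using \<open>x = Some a\<close> \<open>y = Some b\<close> Some by simp
        from mod_h[OF assms(1) this] have "b mod (w+1) = c mod (w+1)" by (rule mod_cancel)
        then show False using bc by simp
      qed
    qed
  qed
qed

definition col :: "nat \<Rightarrow> nat option set \<Rightarrow> nat" where
  "col w e = (SOME k. \<exists>u v. e = {u,v} \<and> k = cp w u v) - 1"

lemma col_eq: "col w {u,v} = cp w u v - 1"
proof -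
  define S where "S = (SOME k. \<exists>u' v'. {u,v} = {u',v'} \<and> k = cp w u' v')"
  have "\<exists>k u' v'. {u,v} = {u',v'} \<and> k = cp w u' v'"
    by (intro exI[of _ "cp w u v"] exI[of _ u] exI[of _ v]) simp
  then have "\<exists>u' v'. {u,v} = {u',v'} \<and> S = cp w u' v'" unfolding S_def by (rule someI_ex)
  then obtain u' v' where uv: "{u,v} = {u',v'}" "S = cp w u' v'" by (elim exE conjE)
  from uv(1) have "(u = u' \<and> v = v') \<or> (u = v' \<and> v = u')" by (simp add: doubleton_eq_iff)
  then have "S = cp w u v" using uv(2) cp_sym by (elim disjE conjE) simp_all
  then show ?thesis unfolding col_def S_def by simp
qed

lemma col_proper:
  assumes "even w" "4 \<le> w"
  shows "proper_edge_colouring (L1 w) (col w) w"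
  unfolding proper_edge_colouring_def
proof (intro conjI ballI impI)
  fix e assume "e \<in> L1 w"
  then obtain u v where uv: "e = {u,v}" "u \<in> L1_vertices w" "v \<in> L1_vertices w" "u \<noteq> v"
    and nr: "e \<notin> L1_removed w" unfolding L1_mem by (elim conjE exE)
  have "1 \<le> cp w u v \<and> cp w u v \<le> w" using cp_range[OF assms uv(2,3,4)] nr uv(1) by simp
  moreover have "col w e = cp w u v - 1" using uv(1) col_eq by simp
  ultimately show "col w e < w" by arith
next
  fix e f assume ef: "e \<in> L1 w" "f \<in> L1 w" "e \<noteq> f \<and> e \<inter> f \<noteq> {}"
  then obtain x where x: "x \<in> e" "x \<in> f" by blast
  obtain y where y: "e = {x,y}" "x \<noteq> y" "x \<in> L1_vertices w" "y \<in> L1_vertices w" "{x,y} \<notin> L1_removed w"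
    using L1_at[OF ef(1) x(1)] by (elim exE conjE)
  obtain y' where y': "f = {x,y'}" "x \<noteq> y'" "x \<in> L1_vertices w" "y' \<in> L1_vertices w" "{x,y'} \<notin> L1_removed w"
    using L1_at[OF ef(2) x(2)] by (elim exE conjE)
  have "y \<noteq> y'" using ef(3) y(1) y'(1) by blast
  have "cp w x y \<noteq> cp w x y'" using cp_inj[OF assms y(3) y(4) y'(4) y(2) y'(2) \<open>y \<noteq> y'\<close> y(5) y'(5)] .
  moreover have "1 \<le> cp w x y" using cp_range[OF assms y(3,4,2,5)] by simp
  moreover have "1 \<le> cp w x y'" using cp_range[OF assms y'(3,4,2,5)] by simp
  ultimately show "col w e \<noteq> col w f" using y(1) y'(1) col_eq by simp
qed

lemma card_V: "card (L1_vertices w) = w + 2"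
proof -
  have "L1_vertices w = insert None (Some ` {0..w})" unfolding L1_vertices_def by blast
  moreover have "card (Some ` {0..w}) = w + 1" by (simp add: card_image)
  ultimately show ?thesis by simp
qed

lemma fin_V: "finite (L1_vertices w)" unfolding L1_vertices_def by simp

lemma partner:
  assumes "even w" "4 \<le> w" "v \<in> L1_vertices w" "v \<noteq> Some 1" "v \<noteq> Some 2"
  shows "\<exists>p. p \<in> L1_vertices w \<and> p \<noteq> v \<and> (\<forall>u\<in>L1_vertices w. u \<noteq> v \<and> u \<noteq> p \<longrightarrow> {v,u} \<in> L1 w)"
proof (cases v)
  case None
  show ?thesis
  proof (intro exI[of _ "Some 1"] conjI ballI impI)
    show "Some 1 \<in> L1_vertices w" using assms unfolding L1_vertices_def by simp
    show "Some 1 \<noteq> v" using None by simp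
    fix u assume u: "u \<in> L1_vertices w" "u \<noteq> v \<and> u \<noteq> Some 1"
    then obtain b where b: "u = Some b" "b \<noteq> 1" using None by (cases u) auto
    have "{v,u} \<notin> L1_removed w" using rem_SN[of b w] b None by (simp add: insert_commute)
    then show "{v,u} \<in> L1 w" unfolding L1_iff using u assms(3) by auto
  qed
next
  case (Some a)
  have a: "a \<le> w" using assms(3) Some unfolding L1_vertices_def by auto
  show ?thesis
  proof (cases "a = 0")
    case True
    show ?thesis
    proof (intro exI[of _ "Some 2"] conjI ballI impI)
      show "Some 2 \<in> L1_vertices w" using assms unfolding L1_vertices_def by simp
      show "Some 2 \<noteq> v" using Some True by simp
      fix u assume u: "u \<in> L1_vertices w" "u \<noteq> v \<and> u \<noteq> Some 2"
      have "{v,u} \<notin> L1_removed w"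
      proof (cases u)
        case None
        then show ?thesis using rem_SN[of a w] Some True by simp
      next
        case (Some b)
        have b: "b \<le> w" "b \<noteq> 0" "b \<noteq> 2" using u Some \<open>v = Some a\<close> True unfolding L1_vertices_def by auto
        have "\<not> (a + b = w+1 \<or> {a,b}={0,2} \<or> {a,b}={1,2})" using b True by (auto simp: doubleton_eq_iff)
        then show ?thesis using rem_SS[OF assms(1) a b(1)] Some \<open>v = Some a\<close> by simp
      qed
      then show "{v,u} \<in> L1 w" unfolding L1_iff using u assms(3) by auto
    qed
  next
    case False
    have a3: "3 \<le> a" using False assms(4,5) Some by auto
    have neq: "w + 1 - a \<noteq> a" using assms(1) by presburger
    show ?thesis
    proof (intro exI[of _ "Some (w+1-a)"] conjI ballI impI)
      show "Some (w+1-a) \<in> L1_vertices w" using a3 unfolding L1_vertices_def by auto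
      show "Some (w+1-a) \<noteq> v" using Some neq by simp
      fix u assume u: "u \<in> L1_vertices w" "u \<noteq> v \<and> u \<noteq> Some (w+1-a)"
      have "{v,u} \<notin> L1_removed w"
      proof (cases u)
        case None
        then show ?thesis using rem_SN[of a w] Some a3 by simp
      next
        case (Some b)
        have b: "b \<le> w" "b \<noteq> w+1-a" using u Some \<open>v = Some a\<close> unfolding L1_vertices_def by auto
        have "a + b \<noteq> w + 1" using b a by arith
        moreover have "{a,b} \<noteq> {0,2}" "{a,b} \<noteq> {1,2}" using a3 by (auto simp: doubleton_eq_iff)
        ultimately have "\<not> (a + b = w+1 \<or> {a,b}={0,2} \<or> {a,b}={1,2})" by blast
        then show ?thesis using rem_SS[OF assms(1) a b(1)] Some \<open>v = Some a\<close> by simp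
      qed
      then show "{v,u} \<in> L1 w" unfolding L1_iff using u assms(3) by auto
    qed
  qed
qed

lemma hits:
  assumes "proper_edge_colouring (L1 w) c k" "v \<in> L1_vertices w" "p \<in> L1_vertices w" "p \<noteq> v"
    "\<forall>u\<in>L1_vertices w. u \<noteq> v \<and> u \<noteq> p \<longrightarrow> {v,u} \<in> L1 w"
  shows "w \<le> k \<and> (k = w \<longrightarrow> (\<forall>j<k. \<exists>e\<in>L1 w. v \<in> e \<and> c e = j))"
proof -
  define B where "B = L1_vertices w - {v,p}"
  define A where "A = (\<lambda>u. {v,u}) ` B"
  have finB: "finite B" unfolding B_def using fin_V by simp
  have cardB: "card B = w"
  proof -
    have "card B = card (L1_vertices w) - card {v,p}" unfolding B_def
      using assms(2,3) fin_V by (intro card_Diff_subset) auto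
    then show ?thesis using card_V assms(4) by simp
  qed
  have AL: "A \<subseteq> L1 w" unfolding A_def B_def using assms(5) by blast
  have Av: "\<forall>e\<in>A. v \<in> e" unfolding A_def by blast
  have inj1: "inj_on (\<lambda>u. {v,u}) B"
  proof (rule inj_onI)
    fix x y assume "x \<in> B" "y \<in> B" "{v,x} = {v,y}"
    then show "x = y" unfolding B_def by (auto simp: doubleton_eq_iff)
  qed
  have cardA: "card A = w" unfolding A_def using card_image[OF inj1] cardB by simp
  have finA: "finite A" unfolding A_def using finB by simp
  have inj2: "inj_on c A"
  proof (rule inj_onI)
    fix e f assume ef: "e \<in> A" "f \<in> A" "c e = c f"
    show "e = f"
    proof (rule ccontr)
      assume "e \<noteq> f"
      moreover have "e \<inter> f \<noteq> {}" using Av ef by blast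
      ultimately have "c e \<noteq> c f" using assms(1) AL ef unfolding proper_edge_colouring_def by blast
      then show False using ef(3) by simp
    qed
  qed
  have cA: "card (c ` A) = w" using card_image[OF inj2] cardA by simp
  have sub: "c ` A \<subseteq> {..<k}" using assms(1) AL unfolding proper_edge_colouring_def by auto
  have "w \<le> k" using card_mono[OF _ sub] cA by simp
  moreover have "k = w \<longrightarrow> (\<forall>j<k. \<exists>e\<in>L1 w. v \<in> e \<and> c e = j)"
  proof (intro impI allI)
    fix j assume "k = w" "j < k"
    then have "c ` A = {..<k}" using card_subset_eq[OF _ sub] cA by simp
    then have "j \<in> c ` A" using \<open>j < k\<close> by simp
    then obtain e where "e \<in> A" "c e = j" by blast
    then show "\<exists>e\<in>L1 w. v \<in> e \<and> c e = j" using AL Av by blast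
  qed
  ultimately show ?thesis by blast
qed

lemma lower:
  assumes "even w" "4 \<le> w" "proper_edge_colouring (L1 w) c k"
  shows "w \<le> k"
proof -
  have v: "Some 0 \<in> L1_vertices w" unfolding L1_vertices_def by simp
  obtain p where "p \<in> L1_vertices w" "p \<noteq> Some 0" "\<forall>u\<in>L1_vertices w. u \<noteq> Some 0 \<and> u \<noteq> p \<longrightarrow> {Some 0,u} \<in> L1 w"
    using partner[OF assms(1,2) v] by auto
  then show ?thesis using hits[OF assms(3) v] by blast
qed

lemma fin_L1: "finite (L1 w)"
proof -
  have "L1 w \<subseteq> Pow (L1_vertices w)"
  proof
    fix e assume "e \<in> L1 w"
    then obtain u v where "e = {u,v}" "u \<in> L1_vertices w" "v \<in> L1_vertices w"
      unfolding L1_mem by (elim conjE exE)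
    then show "e \<in> Pow (L1_vertices w)" by simp
  qed
  moreover have "finite (Pow (L1_vertices w))" using fin_V by simp
  ultimately show ?thesis by (rule finite_subset)
qed

lemma colours_at_iff: "k \<in> colours_at E c v \<longleftrightarrow> (\<exists>e. k = c e \<and> e \<in> E \<and> v \<in> e)"
  by (simp only: colours_at_def mem_Collect_eq)

lemma parity:
  assumes "even w" "4 \<le> w" "proper_edge_colouring (L1 w) c w"
    "s \<in> {Some 1, Some 2}" "t \<in> {Some 1, Some 2}" "s \<noteq> t" "k \<in> colours_at (L1 w) c s"
  shows "k \<in> colours_at (L1 w) c t"
proof (rule ccontr)
  assume nt: "k \<notin> colours_at (L1 w) c t"
  have PP: "\<forall>e\<in>L1 w. \<forall>f\<in>L1 w. e \<noteq> f \<and> e \<inter> f \<noteq> {} \<longrightarrow> c e \<noteq> c f"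
    using assms(3) unfolding proper_edge_colouring_def by (rule conjunct2)
  have PR: "\<forall>e\<in>L1 w. c e < w"
    using assms(3) unfolding proper_edge_colouring_def by (rule conjunct1)
  obtain e0 where e0: "k = c e0" "e0 \<in> L1 w" "s \<in> e0" using assms(7) unfolding colours_at_iff
    by (elim exE conjE)
  have kw: "k < w" using PR e0 by simp
  define M where "M = {e \<in> L1 w. c e = k}"
  have cov: "\<exists>e\<in>M. v \<in> e" if vv: "v \<in> L1_vertices w" "v \<noteq> Some 1" "v \<noteq> Some 2" for v
  proof -
    obtain p where p: "p \<in> L1_vertices w" "p \<noteq> v" "\<forall>u\<in>L1_vertices w. u \<noteq> v \<and> u \<noteq> p \<longrightarrow> {v,u} \<in> L1 w"
      using partner[OF assms(1,2) vv] by (elim exE conjE)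
    have "\<forall>j<w. \<exists>e\<in>L1 w. v \<in> e \<and> c e = j" using hits[OF assms(3) vv(1) p] by simp
    then obtain e where "e \<in> L1 w" "v \<in> e" "c e = k" using kw by blast
    then show ?thesis unfolding M_def by blast
  qed
  have UM: "\<Union>M = L1_vertices w - {t}"
  proof
    show "\<Union>M \<subseteq> L1_vertices w - {t}"
    proof
      fix x assume "x \<in> \<Union>M"
      then obtain e where e: "e \<in> M" "x \<in> e" by blast
      have eL: "e \<in> L1 w" "c e = k" using e(1) unfolding M_def by simp_all
      then obtain u v where "e = {u,v}" "u \<in> L1_vertices w" "v \<in> L1_vertices w"
        unfolding L1_mem by (elim conjE exE)
      then have "e \<subseteq> L1_vertices w" by simp
      moreover have "t \<notin> e"
      proof
        assume "t \<in> e"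
        then have "k \<in> colours_at (L1 w) c t" unfolding colours_at_iff
          using eL by (intro exI[of _ e]) simp
        then show False using nt by simp
      qed
      ultimately show "x \<in> L1_vertices w - {t}" using e(2) by blast
    qed
  next
    show "L1_vertices w - {t} \<subseteq> \<Union>M"
    proof
      fix x assume x: "x \<in> L1_vertices w - {t}"
      show "x \<in> \<Union>M"
      proof (cases "x = s")
        case True
        have "e0 \<in> M" unfolding M_def using e0 by simp
        then show ?thesis using e0(3) True by blast
      next
        case False
        then have "x \<noteq> Some 1" "x \<noteq> Some 2" using x assms(4,5,6) by auto
        then obtain e where "e \<in> M" "x \<in> e" using cov x by blast
        then show ?thesis by blast
      qed
    qed
  qed
  have finM: "finite M" unfolding M_def using fin_L1 by simp
  have disj: "pairwise disjnt M"
  proof (rule pairwiseI)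
    fix e f assume ef: "e \<in> M" "f \<in> M" "e \<noteq> f"
    have ef2: "e \<in> L1 w" "f \<in> L1 w" "c e = k" "c f = k" using ef(1,2) unfolding M_def by simp_all
    show "disjnt e f"
    proof (rule ccontr)
      assume "\<not> disjnt e f"
      then have "e \<inter> f \<noteq> {}" unfolding disjnt_def by simp
      then have "c e \<noteq> c f" using PP ef2(1,2) ef(3) by simp
      then show False using ef2 by simp
    qed
  qed
  have c2: "card e = 2" if eM: "e \<in> M" for e
  proof -
    have "e \<in> L1 w" using eM unfolding M_def by simp
    then obtain u v where "e = {u,v}" "u \<noteq> v" unfolding L1_mem by (elim conjE exE)
    then show ?thesis by simp
  qed
  have fe: "finite e" if eM2: "e \<in> M" for e
    by (rule card_ge_0_finite) (simp add: c2[OF eM2])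
  have "card (\<Union>M) = sum card M" by (rule card_Union_disjoint[OF disj fe])
  also have "\<dots> = sum (\<lambda>_. 2) M" using c2 by (rule sum.cong[OF refl])
  also have "\<dots> = 2 * card M" by simp
  finally have "card (\<Union>M) = 2 * card M" .
  moreover have "card (L1_vertices w - {t}) = w + 1"
  proof -
    have "t \<in> L1_vertices w" using assms(5) assms(2) unfolding L1_vertices_def by auto
    then show ?thesis using card_V fin_V by simp
  qed
  ultimately have "w + 1 = 2 * card M" using UM by simp
  then show False using assms(1) by presburger
qed

theorem lemma12:
  fixes w :: nat
  assumes "even w" and "w \<ge> 4"
  shows "chromatic_index (L1 w) = w
     \<and> (\<forall>c. proper_edge_colouring (L1 w) c w \<longrightarrow>
            colours_at (L1 w) c (Some 1) = colours_at (L1 w) c (Some 2))"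
proof
  show "chromatic_index (L1 w) = w"
    unfolding chromatic_index_def
  proof (rule Least_equality)
    show "\<exists>c. proper_edge_colouring (L1 w) c w" using col_proper[OF assms] by blast
  next
    fix k assume "\<exists>c. proper_edge_colouring (L1 w) c k"
    then show "w \<le> k" using lower[OF assms] by blast
  qed
next
  show "\<forall>c. proper_edge_colouring (L1 w) c w \<longrightarrow>
            colours_at (L1 w) c (Some 1) = colours_at (L1 w) c (Some 2)"
  proof (intro allI impI)
    fix c assume P: "proper_edge_colouring (L1 w) c w"
    show "colours_at (L1 w) c (Some 1) = colours_at (L1 w) c (Some 2)"
    proof
      show "colours_at (L1 w) c (Some 1) \<subseteq> colours_at (L1 w) c (Some 2)"
        using parity[OF assms P, of "Some 1" "Some 2"] by auto
      show "colours_at (L1 w) c (Some 2) \<subseteq> colours_at (L1 w) c (Some 1)"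
        using parity[OF assms P, of "Some 2" "Some 1"] by auto
    qed
  qed
qed

end
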